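(* Let $G=(g_1,\dots,g_k)\in\mathbb{N}_0^k$ be telescopic with $g_1>0$ and $c(G)=(c_2,\dots,c_k)$, and suppose $g_n=c_mg_m$ for some $m,n$ with $1<n<m\le k$. Then the sequence $$H=(g_1,\dots,g_{n-1},\,g_m,\,g_{n+1},\dots,g_{m-1},\,g_{m+1},\dots,g_k)\in\mathbb{N}_0^{k-1}$$ (obtained by swapping the $n$th and $m$th entries of $G$ and then deleting the $m$th entry) is telescopic and satisfies $\langle H\rangle=\langle G\rangle$.
   Context: $\langle\cdot\rangle$ denotes the set of $\mathbb{N}_0$-linear combinations. $G_i=(g_1,\dots,g_i)$, $d_i=\gcd(G_i)$, $c_j=d_{j-1}/d_j$; a sequence $G$ with $g_1>0$ is telescopic if $c_jg_j\in\langle G_{j-1}\rangle$ for all $2\le j\le k$. *)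

theory Defs
  imports Main
begin

text \<open>Sequences G = (g_1,...,g_k) are lists of naturals; g_i = G ! (i-1).\<close>

definition semigrp :: "nat list \<Rightarrow> nat set" where
  "semigrp G = {\<Sum>i<length G. a i * G ! i | a :: nat \<Rightarrow> nat. True}"

definition dseq :: "nat list \<Rightarrow> nat \<Rightarrow> nat" where
  "dseq G i = Gcd (set (take i G))"

definition cseq :: "nat list \<Rightarrow> nat \<Rightarrow> nat" where
  "cseq G j = dseq G (j - 1) div dseq G j"

definition telescopic :: "nat list \<Rightarrow> bool" where
  "telescopic G \<longleftrightarrow> G \<noteq> [] \<and> G ! 0 > 0 \<and>
     (\<forall>j. 2 \<le> j \<and> j \<le> length G \<longrightarrow> cseq G j * G ! (j - 1) \<in> semigrp (take (j - 1) G))"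

end

theory Submission imports Defs "HOL-Computational_Algebra.Primes" begin

lemma modlaw:
  fixes a b c :: nat
  assumes "a > 0" "b > 0" "c \<ge> 0" "a dvd lcm b c" "b dvd a"
  shows "a dvd lcm b (gcd a c)"
proof (cases "c = 0")
  case True then show ?thesis using assms by (simp add: lcm_proj2_if_dvd)
next
  case False
  then have "c > 0" by simp
  show ?thesis
proof (rule multiplicity_le_imp_dvd)
  show "a \<noteq> 0" using assms by simp
  fix p :: nat assume p: "prime p"
  have "multiplicity p a \<le> multiplicity p (lcm b c)"
    using dvd_imp_multiplicity_le[OF assms(4)] assms \<open>c > 0\<close> by (simp add: lcm_eq_0_iff)
  also have "\<dots> = max (multiplicity p b) (multiplicity p c)"
    using multiplicity_lcm[of b c p] assms p \<open>c > 0\<close> by simp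
  finally have 1: "multiplicity p a \<le> max (multiplicity p b) (multiplicity p c)" .
  have 2: "multiplicity p b \<le> multiplicity p a"
    using dvd_imp_multiplicity_le[OF assms(5)] assms by simp
  have "multiplicity p (lcm b (gcd a c)) = max (multiplicity p b) (min (multiplicity p a) (multiplicity p c))"
    using multiplicity_lcm[of b "gcd a c" p] multiplicity_gcd[of a c p] assms p \<open>c > 0\<close> by simp
  then show "multiplicity p a \<le> multiplicity p (lcm b (gcd a c))" using 1 2 by simp
qed
qed

inductive_set mon :: "nat set \<Rightarrow> nat set" for A where
  mon0: "0 \<in> mon A"
| monS: "a \<in> A \<Longrightarrow> x \<in> mon A \<Longrightarrow> a + x \<in> mon A"

lemma mon_add: "x \<in> mon A \<Longrightarrow> y \<in> mon A \<Longrightarrow> x + y \<in> mon A"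
  by (induction x rule: mon.induct) (auto simp: add.assoc intro: mon.intros)

lemma mon_base: "a \<in> A \<Longrightarrow> a \<in> mon A"
  using monS[OF _ mon0, of a A] by simp

lemma mon_mult: "x \<in> mon A \<Longrightarrow> k * x \<in> mon A"
  by (induction k) (auto intro: mon_add mon0)

lemma mon_sum: "finite I \<Longrightarrow> (\<forall>i\<in>I. f i \<in> mon A) \<Longrightarrow> sum f I \<in> mon A"
  by (induction I rule: finite_induct) (auto intro: mon_add mon0)

lemma mon_sub: "A \<subseteq> mon B \<Longrightarrow> mon A \<subseteq> mon B"
proof
  fix x assume A: "A \<subseteq> mon B" and x: "x \<in> mon A"
  from x show "x \<in> mon B"
  proof (induction x rule: mon.induct)
    case mon0 show ?case by (rule mon.mon0)
  next
    case (monS a x)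
    have "a \<in> mon B" using monS(1) A by blast
    then show ?case using monS(3) by (rule mon_add)
  qed
qed

lemma semigrp_mon: "semigrp L = mon (set L)"
proof
  show "semigrp L \<subseteq> mon (set L)"
  proof
    fix x assume "x \<in> semigrp L"
    then obtain a where x: "x = (\<Sum>i<length L. a i * L ! i)" unfolding semigrp_def by auto
    show "x \<in> mon (set L)" unfolding x
      by (rule mon_sum) (simp, intro ballI mon_mult mon_base nth_mem, simp)
  qed
  show "mon (set L) \<subseteq> semigrp L"
  proof
    fix x assume "x \<in> mon (set L)"
    then show "x \<in> semigrp L"
    proof (induction x rule: mon.induct)
      case mon0
      show ?case unfolding semigrp_def by (rule CollectI, rule exI[of _ "\<lambda>_. 0"]) simp
    next
      case (monS a x)
      from monS(3) obtain b where b: "x = (\<Sum>i<length L. b i * L ! i)"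
        unfolding semigrp_def by auto
      from monS(1) obtain i where i: "i < length L" "a = L ! i"
        by (auto simp: in_set_conv_nth)
      let ?b = "b(i := b i + 1)"
      have "(\<Sum>t<length L. ?b t * L ! t) = (\<Sum>t<length L. b t * L ! t + (if t = i then L ! i else 0))"
        by (rule sum.cong) auto
      also have "\<dots> = x + a" using i b by (simp add: sum.distrib)
      finally show ?case unfolding semigrp_def by (auto intro!: exI[of _ ?b])
    qed
  qed
qed

lemma mon_sub2:
  assumes "\<forall>x\<in>A. x \<in> B \<or> x = y" "y \<in> mon B"
  shows "mon A \<subseteq> mon B"
  using assms by (intro mon_sub) (auto intro: mon_base)

lemma set_take_iff: "x \<in> set (take i L) \<longleftrightarrow> (\<exists>t. t < i \<and> t < length L \<and> x = L ! t)"
  by (auto simp: in_set_conv_nth)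

lemma dseq_Suc:
  assumes "j < length G"
  shows "dseq G (Suc j) = gcd (G ! j) (dseq G j)"
  using assms by (simp add: dseq_def take_Suc_conv_app_nth)

lemma dseq_pos:
  assumes "G ! 0 > 0" "1 \<le> j" "j \<le> length G"
  shows "dseq G j > 0"
proof -
  have "G ! 0 \<in> set (take j G)" using assms by (auto simp: set_take_iff intro!: exI[of _ 0])
  then have "Gcd (set (take j G)) dvd G ! 0" by (rule Gcd_dvd)
  then show ?thesis using assms unfolding dseq_def by (auto intro: Nat.gr0I)
qed

lemma cseq_lcm:
  assumes "1 \<le> j" "j \<le> length G"
  shows "cseq G j * G ! (j - 1) = lcm (dseq G (j - 1)) (G ! (j - 1))"
proof -
  obtain i where i: "j = Suc i" using assms by (cases j) auto
  have d: "dseq G j = gcd (dseq G i) (G ! i)" using dseq_Suc[of i G] assms i by (simp add: gcd.commute)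
  have "cseq G j * G ! (j - 1) = (dseq G i div gcd (dseq G i) (G ! i)) * G ! i"
    using d i by (simp add: cseq_def)
  also have "\<dots> = dseq G i * G ! i div gcd (dseq G i) (G ! i)"
    by (rule dvd_div_mult) simp
  also have "\<dots> = lcm (dseq G i) (G ! i)" by (simp add: lcm_nat_def)
  finally show ?thesis using i by simp
qed

theorem mainTheorem17:
  fixes G :: "nat list" and n m :: nat
  assumes "telescopic G"
    and "1 < n" and "n < m" and "m \<le> length G"
    and "G ! (n - 1) = cseq G m * G ! (m - 1)"
  shows "let G' = G[n - 1 := G ! (m - 1)]; H = take (m - 1) G' @ drop m G'
         in telescopic H \<and> semigrp H = semigrp G"
proof -
  note tel = assms(1) and n1 = assms(2) and nm = assms(3) and mlen = assms(4) and gneq = assms(5)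
  define G' where "G' = G[n - 1 := G ! (m - 1)]"
  define H where "H = take (m - 1) G' @ drop m G'"
  define gm where "gm = G ! (m - 1)"
  define gn where "gn = G ! (n - 1)"
  have lenG': "length G' = length G" by (simp add: G'_def)
  have lenH: "length H = length G - 1" using mlen nm by (simp add: H_def lenG')
  have Hnth: "H ! t = (if t < m - 1 then (if t = n - 1 then gm else G ! t) else G ! (t + 1))"
    if "t < length H" for t
  proof (cases "t < m - 1")
    case True
    then have "H ! t = G' ! t" using mlen nm lenG' by (simp add: H_def nth_append)
    then show ?thesis using True mlen nm by (simp add: G'_def gm_def nth_list_update)
  next
    case False
    then have "H ! t = G' ! (t + 1)" using mlen nm lenG' that lenH
      by (simp add: H_def nth_append)
    moreover have "t + 1 \<noteq> n - 1" using False nm by simp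
    ultimately show ?thesis using False that lenH by (simp add: G'_def)
  qed
  have G0: "G \<noteq> []" "G ! 0 > 0" using tel by (auto simp: telescopic_def)
  have telG: "cseq G j * G ! (j - 1) \<in> mon (set (take (j - 1) G))" if "2 \<le> j" "j \<le> length G" for j
    using tel that by (auto simp: telescopic_def semigrp_mon)
  have gn_lcm: "gn = lcm (dseq G (m - 1)) gm"
    using gneq cseq_lcm[of m G] nm mlen by (simp add: gn_def gm_def)
  have gm_gn: "gm dvd gn" using gneq by (simp add: gn_def gm_def)
  have lenHm: "m - 1 \<le> length H" using lenH mlen nm by simp
  have nm1: "n - 1 < m - 1" "n - 1 < length H" using nm n1 lenHm by linarith+
  have Hn1: "H ! (n - 1) = gm" using Hnth[OF nm1(2)] nm1(1) by simp
  have gm_in: "gm \<in> set (take i H)" if "n \<le> i" "i \<le> length H" for i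
  proof -
    have "H ! (n - 1) = gm" by (rule Hn1)
    then show ?thesis unfolding set_take_iff using that n1 by (auto intro!: exI[of _ "n - 1"])
  qed
  have gn_mon: "gn \<in> mon (set (take i H))" if "n \<le> i" "i \<le> length H" for i
    using gneq mon_mult[OF mon_base[OF gm_in[OF that]]] by (simp add: gn_def gm_def)
  define k where "k i = (if i < m - 1 then i else Suc i)" for i
  have relA: "x \<in> set (take (k i) G) \<or> x = gm" if "x \<in> set (take i H)" "n \<le> i" "i \<le> length H" for x i
  proof -
    from that(1) obtain t where t: "t < i" "t < length H" "x = H ! t" unfolding set_take_iff by auto
    show ?thesis
    proof (cases "t < m - 1")
      case True
      show ?thesis
      proof (cases "t = n - 1")
        case True with t Hnth \<open>t < m - 1\<close> show ?thesis by simp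
      next
        case False
        then have "x = G ! t" using t Hnth \<open>t < m - 1\<close> by simp
        moreover have "t < k i" using t by (simp add: k_def)
        moreover have "t < length G" using t lenH by simp
        ultimately show ?thesis unfolding set_take_iff by blast
      qed
    next
      case False
      then have "x = G ! (t + 1)" using t Hnth by simp
      moreover have "t + 1 < k i" using t False by (simp add: k_def)
      moreover have "t + 1 < length G" using t lenH by simp
      ultimately show ?thesis unfolding set_take_iff by blast
    qed
  qed
  have relB: "x \<in> set (take i H) \<or> x = gn" if "x \<in> set (take (k i) G)" "n \<le> i" "i \<le> length H" for x i
  proof -
    from that(1) obtain t where t: "t < k i" "t < length G" "x = G ! t" unfolding set_take_iff by auto
    consider "t = n - 1" | "t < m - 1" "t \<noteq> n - 1" | "t = m - 1" | "t \<ge> m" by linarith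
    then show ?thesis
    proof cases
      case 1 then show ?thesis using t by (simp add: gn_def)
    next
      case 2
      have "t < i" using t 2 by (auto simp: k_def split: if_splits)
      moreover have "t < length H" using 2 lenHm by simp
      moreover have "H ! t = x" using Hnth[of t] 2 t lenHm by simp
      ultimately show ?thesis unfolding set_take_iff by blast
    next
      case 3 then show ?thesis using gm_in[OF that(2,3)] t by (simp add: gm_def)
    next
      case 4
      have "t - 1 < i" using t 4 nm by (auto simp: k_def split: if_splits)
      moreover have a: "t - 1 < length H" using 4 t lenH nm by simp
      moreover have "H ! (t - 1) = x"
      proof -
        have b: "\<not> t - 1 < m - 1" using 4 by linarith
        have "t - 1 + 1 = t" using 4 nm by linarith
        then show ?thesis using Hnth[OF a] b t by simp
      qed
      ultimately show ?thesis unfolding set_take_iff by blast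
    qed
  qed
  have monB: "mon (set (take (k i) G)) \<subseteq> mon (set (take i H))" if "n \<le> i" "i \<le> length H" for i
    by (rule mon_sub2[OF _ gn_mon[OF that]]) (use relB that in blast)
  have D_E: "dseq H i dvd dseq G (k i)" if "n \<le> i" "i \<le> length H" for i
    unfolding dseq_def
  proof (rule Gcd_greatest)
    fix x assume "x \<in> set (take (k i) G)"
    then have "x \<in> set (take i H) \<or> x = gn" using relB that by blast
    then show "Gcd (set (take i H)) dvd x"
    proof
      assume "x = gn"
      have "Gcd (set (take i H)) dvd gm" using gm_in[OF that] by (rule Gcd_dvd)
      then show ?thesis using gm_gn \<open>x = gn\<close> by (blast intro: dvd_trans)
    qed (rule Gcd_dvd)
  qed
  have E_D: "gcd (dseq G (k i)) gm dvd dseq H i" if "n \<le> i" "i \<le> length H" for i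
    unfolding dseq_def
  proof (rule Gcd_greatest)
    fix x assume "x \<in> set (take i H)"
    then have "x \<in> set (take (k i) G) \<or> x = gm" using relA that by blast
    then show "gcd (Gcd (set (take (k i) G))) gm dvd x"
    proof
      assume "x \<in> set (take (k i) G)"
      then have "Gcd (set (take (k i) G)) dvd x" by (rule Gcd_dvd)
      then show ?thesis by (blast intro: dvd_trans)
    qed simp
  qed
  have pref: "take l H = take l G" if "l \<le> n - 1" for l
  proof -
    have "take l H = take l G'" using that nm mlen lenG' by (simp add: H_def)
    also have "\<dots> = take l G" using that by (simp add: G'_def take_update_cancel)
    finally show ?thesis .
  qed
  have dsub: "dseq G b dvd dseq G a" if "a \<le> b" for a b
    unfolding dseq_def
  proof (rule Gcd_greatest)
    fix x assume "x \<in> set (take a G)"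
    then have "x \<in> set (take b G)" by (rule subsetD[OF set_take_subset_set_take[OF that]])
    then show "Gcd (set (take b G)) dvd x" by (rule Gcd_dvd)
  qed
  have teleH: "cseq H j * H ! (j - 1) \<in> mon (set (take (j - 1) H))" if j: "2 \<le> j" "j \<le> length H" for j
  proof -
    have lc: "cseq H j * H ! (j - 1) = lcm (dseq H (j - 1)) (H ! (j - 1))"
      using cseq_lcm[of j H] j by simp
    consider "j < n" | "j = n" | "n < j" "j \<le> m - 1" | "m - 1 < j" by linarith
    then show ?thesis
    proof cases
      case 1
      have t1: "take j H = take j G" using pref 1 by simp
      have t2: "take (j - 1) H = take (j - 1) G" using pref 1 by simp
      have "cseq H j = cseq G j" using t1 t2 by (simp add: cseq_def dseq_def)
      moreover have "H ! (j - 1) = G ! (j - 1)"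
      proof -
        have jj: "j - 1 < j" using j by simp
        have "H ! (j - 1) = take j H ! (j - 1)" using jj by simp
        also have "\<dots> = take j G ! (j - 1)" using t1 by simp
        also have "\<dots> = G ! (j - 1)" using jj by simp
        finally show ?thesis .
      qed
      ultimately show ?thesis using telG[of j] t2 j lenH by simp
    next
      case 2
      have t2: "take (n - 1) H = take (n - 1) G" using pref by simp
      define D0 where "D0 = dseq G (n - 1)"
      have dH: "dseq H (n - 1) = D0" using t2 by (simp add: dseq_def D0_def)
      have Hn: "H ! (n - 1) = gm" by (rule Hn1)
      have dd: "dseq G (m - 1) dvd D0" unfolding D0_def using dsub nm by simp
      have "lcm D0 gm = lcm D0 gn" unfolding gn_lcm
        using dd by (simp add: lcm.assoc[symmetric])
      also have "\<dots> = cseq G n * G ! (n - 1)" using cseq_lcm[of n G] n1 nm mlen by (simp add: D0_def gn_def)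
      finally have "lcm D0 gm = cseq G n * G ! (n - 1)" .
      then show ?thesis using lc dH Hn telG[of n] 2 n1 nm mlen t2 by simp
    next
      case 3
      define i where "i = j - 1"
      have i: "n \<le> i" "i < m - 1" "i \<le> length H" "k i = i" using 3 j by (auto simp: i_def k_def)
      have ilt: "i < length H" "i \<noteq> n - 1" using i j 3 unfolding i_def by linarith+
      have Hi: "H ! i = G ! i" using Hnth[OF ilt(1)] ilt(2) i(2) by simp
      define E where "E = dseq G i"
      define D where "D = dseq H i"
      define g where "g = G ! i"
      have DE: "D dvd E" using D_E[OF i(1,3)] i by (simp add: D_def E_def)
      have ED: "gcd E gm dvd D" using E_D[OF i(1,3)] i by (simp add: D_def E_def)
      have Epos: "E > 0" using dseq_pos[OF G0(2), of i] i n1 lenH by (simp add: E_def)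
      have dpos: "dseq G (m - 1) > 0" using dseq_pos[OF G0(2), of "m - 1"] nm n1 mlen by simp
      have gnin: "gn \<in> set (take i G)" unfolding set_take_iff gn_def using i n1 lenH
        by (auto intro!: exI[of _ "n - 1"])
      have "E dvd gn" unfolding E_def dseq_def using gnin by (rule Gcd_dvd)
      then have E1: "E dvd lcm (dseq G (m - 1)) gm" using gn_lcm by simp
      have dE: "dseq G (m - 1) dvd E" unfolding E_def using dsub i by simp
      have E2: "E dvd lcm (dseq G (m - 1)) (gcd E gm)"
        using modlaw[OF Epos dpos _ E1 dE] by simp
      have gin: "g \<in> set (take (m - 1) G)" unfolding set_take_iff g_def using i lenH mlen by (auto intro!: exI[of _ i])
      have dg: "dseq G (m - 1) dvd g" unfolding dseq_def using gin by (rule Gcd_dvd)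
      have "lcm (dseq G (m - 1)) (gcd E gm) dvd lcm D g"
        using dg ED by (meson dvd_lcm1 dvd_lcm2 dvd_trans lcm_least)
      with E2 have "E dvd lcm D g" by (rule dvd_trans)
      then have "lcm E g dvd lcm D g" by simp
      moreover have "lcm D g dvd lcm E g" using DE by (meson dvd_lcm1 dvd_lcm2 dvd_trans lcm_least)
      ultimately have "lcm D g = lcm E g" by (rule dvd_antisym[symmetric])
      also have "\<dots> = cseq G j * G ! (j - 1)" using cseq_lcm[of j G] j lenH by (simp add: E_def g_def i_def)
      finally have eq: "cseq H j * H ! (j - 1) = cseq G j * G ! (j - 1)"
        using lc Hi by (simp add: D_def g_def i_def)
      have "cseq G j * G ! (j - 1) \<in> mon (set (take (k i) G))" using telG[of j] j lenH i by (simp add: i_def)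
      then show ?thesis using eq monB[OF i(1,3)] by (auto simp: i_def)
    next
      case 4
      define i where "i = j - 1"
      have i: "n \<le> i" "m - 1 \<le> i" "i < length H" "k i = Suc i" using 4 j nm by (auto simp: i_def k_def)
      have Hi: "H ! i = G ! Suc i" using Hnth[OF i(3)] i(2) by simp
      define E where "E = dseq G (Suc i)"
      define D where "D = dseq H i"
      have DE: "D dvd E" using D_E[of i] i by (simp add: D_def E_def)
      have gmin: "gm \<in> set (take (Suc i) G)" unfolding set_take_iff gm_def using i lenH nm
        by (auto intro!: exI[of _ "m - 1"])
      have "E dvd gm" unfolding E_def dseq_def using gmin by (rule Gcd_dvd)
      then have ED: "E dvd D" using E_D[of i] i by (simp add: D_def E_def gcd_proj1_if_dvd)
      have DE': "D = E" using DE ED by (rule dvd_antisym)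
      have "cseq H j * H ! (j - 1) = lcm E (G ! Suc i)" using lc Hi DE' by (simp add: D_def i_def)
      also have "\<dots> = cseq G (Suc j) * G ! (Suc j - 1)"
        using cseq_lcm[of "Suc j" G] j lenH by (simp add: E_def i_def)
      finally have eq: "cseq H j * H ! (j - 1) = cseq G (Suc j) * G ! (Suc j - 1)" .
      have "cseq G (Suc j) * G ! (Suc j - 1) \<in> mon (set (take (k i) G))"
        using telG[of "Suc j"] j lenH i by (simp add: i_def)
      then show ?thesis using eq monB[of i] i by (auto simp: i_def)
    qed
  qed
  have H0l: "0 < length H" using nm1 by linarith
  have H0: "H ! 0 = G ! 0" using Hnth[OF H0l] n1 nm by simp
  have telH: "telescopic H"
    unfolding telescopic_def semigrp_mon using teleH H0 G0 lenHm nm n1 by auto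
  have kl: "k (length H) = length G" using lenHm lenH G0 by (auto simp: k_def)
  have s1: "mon (set G) \<subseteq> mon (set H)" using monB[of "length H"] kl lenHm nm by simp
  have s2: "mon (set H) \<subseteq> mon (set G)"
  proof (rule mon_sub2)
    show "\<forall>x\<in>set H. x \<in> set G \<or> x = gm"
      using relA[of _ "length H"] kl lenHm nm by auto
    show "gm \<in> mon (set G)" using mlen nm unfolding gm_def by (auto intro!: mon_base)
  qed
  have "semigrp H = semigrp G" using s1 s2 by (simp add: semigrp_mon)
  with telH have "telescopic H \<and> semigrp H = semigrp G" by simp
  then show ?thesis unfolding Let_def H_def G'_def .
qed

end
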